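(* Let $m\ge1$ and let $j\colon K_m\to\mathbb Z^{2m-1}$ be $j(f,0)=(f(-m+1),\dots,f(m-1))$. Then for all $x,y\in K_m$, $$d(x,y)-4(m-1)\ \le\ d_1(j(x),j(y))\ \le\ d(x,y),$$ where $d$ is the word metric of $\mathbb Z\wr\mathbb Z$ and $d_1$ is the $\ell^1$ metric on $\mathbb Z^{2m-1}$.
   Context: The lamplighter group $\mathbb Z\wr\mathbb Z$ consists of pairs $(f,n)$ with $f\colon\mathbb Z\to\mathbb Z$ finitely supported and $n\in\mathbb Z$, with product $(f,n)(g,n')=(f+g(\cdot-n),\,n+n')$; it is equipped with the left-invariant word metric $d$ for the generators $a=(\delta_0,0)$ and $t=(0,1)$. $K=\{(f,0)\}$ and $K_m=\{(f,0):\operatorname{supp}f\subseteq\{-m+1,\dots,m-1\}\}$, with the metric restricted from $d$. *)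

theory Defs
  imports Main
begin

text \<open>Lamplighter group Z wr Z: pairs (f, n) with f : int => int finitely supported.\<close>

type_synonym lamp = "(int \<Rightarrow> int) \<times> int"

definition lamp_mult :: "lamp \<Rightarrow> lamp \<Rightarrow> lamp" where
  "lamp_mult x y = (\<lambda>k. fst x k + fst y (k - snd x), snd x + snd y)"

definition lamp_one :: lamp where
  "lamp_one = (\<lambda>_. 0, 0)"

definition lamp_inv :: "lamp \<Rightarrow> lamp" where
  "lamp_inv x = (\<lambda>k. - fst x (k + snd x), - snd x)"

datatype gen = GA | GAinv | GT | GTinv

definition delta0 :: "int \<Rightarrow> int" where
  "delta0 k = (if k = 0 then 1 else 0)"

fun gen_elem :: "gen \<Rightarrow> lamp" where
  "gen_elem GA = (delta0, 0)"
| "gen_elem GAinv = (\<lambda>k. - delta0 k, 0)"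
| "gen_elem GT = (\<lambda>_. 0, 1)"
| "gen_elem GTinv = (\<lambda>_. 0, -1)"

fun word_eval :: "gen list \<Rightarrow> lamp" where
  "word_eval [] = lamp_one"
| "word_eval (s # w) = lamp_mult (gen_elem s) (word_eval w)"

definition word_dist :: "lamp \<Rightarrow> lamp \<Rightarrow> nat" where
  "word_dist x y = (LEAST n. \<exists>w. length w = n \<and> word_eval w = lamp_mult (lamp_inv x) y)"

definition K_m :: "nat \<Rightarrow> lamp set" where
  "K_m m = {x. snd x = 0 \<and> (\<forall>k. fst x k \<noteq> 0 \<longrightarrow> - int m + 1 \<le> k \<and> k \<le> int m - 1)}"

definition jmap :: "nat \<Rightarrow> lamp \<Rightarrow> int list" where
  "jmap m x = map (fst x) [- int m + 1 .. int m - 1]"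

definition l1_dist :: "int list \<Rightarrow> int list \<Rightarrow> int" where
  "l1_dist u v = sum_list (map (\<lambda>(a, b). \<bar>a - b\<bar>) (zip u v))"

end

theory Submission
  imports Defs
begin

lemma lamp_mult_assoc: "lamp_mult (lamp_mult x y) z = lamp_mult x (lamp_mult y z)"
  by (auto simp: lamp_mult_def algebra_simps)

lemma lamp_one_left[simp]: "lamp_mult lamp_one x = x"
  by (simp add: lamp_mult_def lamp_one_def)

lemma eval_append: "word_eval (u @ v) = lamp_mult (word_eval u) (word_eval v)"
  by (induction u) (auto simp: lamp_mult_assoc)

lemma eval_GA: "word_eval (replicate n GA) = (\<lambda>k. int n * delta0 k, 0)"
  by (induction n) (auto simp: lamp_mult_def lamp_one_def algebra_simps)

lemma eval_GAinv: "word_eval (replicate n GAinv) = (\<lambda>k. - int n * delta0 k, 0)"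
  by (induction n) (auto simp: lamp_mult_def lamp_one_def algebra_simps)

lemma eval_GT: "word_eval (replicate n GT) = (\<lambda>_. 0, int n)"
  by (induction n) (auto simp: lamp_mult_def lamp_one_def algebra_simps)

lemma eval_GTinv: "word_eval (replicate n GTinv) = (\<lambda>_. 0, - int n)"
  by (induction n) (auto simp: lamp_mult_def lamp_one_def algebra_simps)

definition powa :: "int \<Rightarrow> gen list" where
  "powa c = (if c \<ge> 0 then replicate (nat c) GA else replicate (nat (- c)) GAinv)"

lemma eval_powa: "word_eval (powa c) = (\<lambda>k. c * delta0 k, 0)"
  by (auto simp: powa_def eval_GA eval_GAinv)

lemma length_powa: "length (powa c) = nat \<bar>c\<bar>"
  by (auto simp: powa_def)

lemma sum_delta: "finite S \<Longrightarrow> (\<Sum>k\<in>S. \<bar>delta0 k\<bar>) \<le> 1"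
proof -
  assume "finite S"
  have "(\<Sum>k\<in>S. \<bar>delta0 k\<bar>) = (\<Sum>k\<in>S \<inter> {0}. \<bar>delta0 k\<bar>)"
    using \<open>finite S\<close> by (intro sum.mono_neutral_right) (auto simp: delta0_def)
  also have "\<dots> \<le> 1" by (cases "0 \<in> S") (auto simp: delta0_def)
  finally show ?thesis .
qed

lemma lower: "finite S \<Longrightarrow> (\<Sum>k\<in>S. \<bar>fst (word_eval w) k\<bar>) \<le> int (length w)"
proof (induction w arbitrary: S)
  case Nil
  then show ?case by (simp add: lamp_one_def)
next
  case (Cons s w)
  define h where "h = fst (word_eval w)"
  show ?case
  proof (cases s)
    case GA
    have "(\<Sum>k\<in>S. \<bar>delta0 k + h k\<bar>) \<le> (\<Sum>k\<in>S. \<bar>delta0 k\<bar> + \<bar>h k\<bar>)"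
      by (intro sum_mono) auto
    also have "\<dots> = (\<Sum>k\<in>S. \<bar>delta0 k\<bar>) + (\<Sum>k\<in>S. \<bar>h k\<bar>)" by (simp add: sum.distrib)
    also have "\<dots> \<le> 1 + int (length w)" using sum_delta[OF Cons.prems] Cons.IH[OF Cons.prems]
      by (simp add: h_def)
    finally show ?thesis using GA by (simp add: lamp_mult_def h_def)
  next
    case GAinv
    have "(\<Sum>k\<in>S. \<bar>- delta0 k + h k\<bar>) \<le> (\<Sum>k\<in>S. \<bar>delta0 k\<bar> + \<bar>h k\<bar>)"
      by (intro sum_mono) auto
    also have "\<dots> = (\<Sum>k\<in>S. \<bar>delta0 k\<bar>) + (\<Sum>k\<in>S. \<bar>h k\<bar>)" by (simp add: sum.distrib)
    also have "\<dots> \<le> 1 + int (length w)" using sum_delta[OF Cons.prems] Cons.IH[OF Cons.prems]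
      by (simp add: h_def)
    finally show ?thesis using GAinv by (simp add: lamp_mult_def h_def)
  next
    case GT
    have "(\<Sum>k\<in>S. \<bar>h (k - 1)\<bar>) = (\<Sum>j\<in>(\<lambda>k. k - 1) ` S. \<bar>h j\<bar>)"
      by (subst sum.reindex) (auto simp: inj_on_def)
    also have "\<dots> \<le> int (length w)" using Cons.IH[of "(\<lambda>k. k - 1) ` S"] Cons.prems
      by (simp add: h_def)
    finally show ?thesis using GT by (simp add: lamp_mult_def h_def)
  next
    case GTinv
    have "(\<Sum>k\<in>S. \<bar>h (k + 1)\<bar>) = (\<Sum>j\<in>(\<lambda>k. k + 1) ` S. \<bar>h j\<bar>)"
      by (subst sum.reindex) (auto simp: inj_on_def)
    also have "\<dots> \<le> int (length w)" using Cons.IH[of "(\<lambda>k. k + 1) ` S"] Cons.prems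
      by (simp add: h_def)
    finally show ?thesis using GTinv by (simp add: lamp_mult_def h_def)
  qed
qed

lemma upper: "(\<forall>k. g k \<noteq> 0 \<longrightarrow> 0 \<le> k \<and> k \<le> int n) \<Longrightarrow>
  \<exists>w. word_eval w = (g, int n) \<and> int (length w) \<le> (\<Sum>k\<in>{0..int n}. \<bar>g k\<bar>) + int n"
proof (induction n arbitrary: g)
  case 0
  have "g = (\<lambda>k. g 0 * delta0 k)"
    using 0 by (auto simp: delta0_def fun_eq_iff)
  then have "word_eval (powa (g 0)) = (g, int 0)" by (simp add: eval_powa)
  then show ?case by (intro exI[of _ "powa (g 0)"]) (simp add: length_powa)
next
  case (Suc n)
  define g' where "g' = g(int n + 1 := 0)"
  have "\<forall>k. g' k \<noteq> 0 \<longrightarrow> 0 \<le> k \<and> k \<le> int n" using Suc.prems by (auto simp: g'_def)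
  from Suc.IH[OF this] obtain w where w: "word_eval w = (g', int n)"
    "int (length w) \<le> (\<Sum>k\<in>{0..int n}. \<bar>g' k\<bar>) + int n" by blast
  define c where "c = g (int n + 1)"
  have ev: "word_eval (w @ [GT] @ powa c) = (g, int (Suc n))"
    by (auto simp: eval_append w eval_powa lamp_mult_def lamp_one_def g'_def c_def delta0_def fun_eq_iff)
  have s1: "(\<Sum>k\<in>{0..int n}. \<bar>g' k\<bar>) = (\<Sum>k\<in>{0..int n}. \<bar>g k\<bar>)"
    by (intro sum.cong) (auto simp: g'_def)
  have s2: "{0..int (Suc n)} = insert (int n + 1) {0..int n}" by auto
  have s3: "(\<Sum>k\<in>{0..int (Suc n)}. \<bar>g k\<bar>) = \<bar>c\<bar> + (\<Sum>k\<in>{0..int n}. \<bar>g k\<bar>)"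
    unfolding s2 c_def by (subst sum.insert) auto
  show ?case
    by (intro exI[of _ "w @ [GT] @ powa c"]) (use ev w(2) s1 s3 in \<open>auto simp: length_powa\<close>)
qed

theorem lemma4p2p4:
  fixes m :: nat and x y :: lamp
  assumes "m \<ge> 1" and "x \<in> K_m m" and "y \<in> K_m m"
  shows "int (word_dist x y) - 4 * (int m - 1) \<le> l1_dist (jmap m x) (jmap m y)
       \<and> l1_dist (jmap m x) (jmap m y) \<le> int (word_dist x y)"
proof -
  obtain fx where fx: "x = (fx, 0)" using assms(2) unfolding K_m_def by (cases x) auto
  obtain fy where fy: "y = (fy, 0)" using assms(3) unfolding K_m_def by (cases y) auto
  define c where "c = int m - 1"
  have c0: "c \<ge> 0" using assms(1) by (simp add: c_def)
  define g where "g = (\<lambda>k. fy k - fx k)"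
  have target: "lamp_mult (lamp_inv x) y = (g, 0)"
    by (simp add: fx fy lamp_mult_def lamp_inv_def g_def)
  have gsupp: "\<And>k. g k \<noteq> 0 \<Longrightarrow> - c \<le> k \<and> k \<le> c"
    using assms(2,3) unfolding K_m_def fx fy g_def c_def by force
  define S where "S = {- c .. c}"
  have l1: "l1_dist (jmap m x) (jmap m y) = (\<Sum>k\<in>S. \<bar>g k\<bar>)"
  proof -
    have "zip (jmap m x) (jmap m y) = map (\<lambda>k. (fx k, fy k)) [- int m + 1 .. int m - 1]"
      by (simp add: jmap_def fx fy zip_map_map zip_same_conv_map o_def)
    then have "l1_dist (jmap m x) (jmap m y) = sum_list (map (\<lambda>k. \<bar>fx k - fy k\<bar>) [- int m + 1 .. int m - 1])"
      by (simp add: l1_dist_def o_def)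
    also have "\<dots> = (\<Sum>k\<in>S. \<bar>fx k - fy k\<bar>)"
      by (subst sum_list_distinct_conv_sum_set) (auto simp: S_def c_def)
    also have "\<dots> = (\<Sum>k\<in>S. \<bar>g k\<bar>)" by (simp add: g_def abs_minus_commute)
    finally show ?thesis .
  qed
  define h where "h = (\<lambda>k. g (k - c))"
  have "\<forall>k. h k \<noteq> 0 \<longrightarrow> 0 \<le> k \<and> k \<le> int (nat (2 * c))"
  proof (intro allI impI)
    fix k assume "h k \<noteq> 0"
    then have "- c \<le> k - c \<and> k - c \<le> c" using gsupp unfolding h_def by blast
    then show "0 \<le> k \<and> k \<le> int (nat (2 * c))" using c0 by simp
  qed
  from upper[OF this] obtain w where w: "word_eval w = (h, 2 * c)"
    "int (length w) \<le> (\<Sum>k\<in>{0..2 * c}. \<bar>h k\<bar>) + 2 * c" using c0 by auto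
  have hs: "(\<Sum>k\<in>{0..2 * c}. \<bar>h k\<bar>) = (\<Sum>k\<in>S. \<bar>g k\<bar>)"
  proof -
    have "{0..2 * c} = (\<lambda>k. k + c) ` S" unfolding S_def
    proof (intro set_eqI iffI)
      fix k assume "k \<in> {0..2 * c}"
      then have "k - c \<in> {-c..c}" "k = (k - c) + c" by auto
      then show "k \<in> (\<lambda>k. k + c) ` {-c..c}" by blast
    qed auto
    then show ?thesis by (simp add: sum.reindex inj_on_def h_def)
  qed
  define W where "W = replicate (nat c) GTinv @ w @ replicate (nat c) GTinv"
  have evW: "word_eval W = (g, 0)"
    using c0 by (simp add: W_def eval_append eval_GTinv w lamp_mult_def h_def)
  have lenW: "int (length W) \<le> (\<Sum>k\<in>S. \<bar>g k\<bar>) + 4 * c"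
    using w(2) hs c0 by (simp add: W_def)
  have ex: "\<exists>w. length w = length W \<and> word_eval w = lamp_mult (lamp_inv x) y"
    using evW target by auto
  have d1: "word_dist x y \<le> length W"
    unfolding word_dist_def by (rule Least_le) (use ex in blast)
  obtain w0 where w0: "length w0 = word_dist x y" "word_eval w0 = lamp_mult (lamp_inv x) y"
    using LeastI_ex[of "\<lambda>n. \<exists>w. length w = n \<and> word_eval w = lamp_mult (lamp_inv x) y"] ex
    unfolding word_dist_def by blast
  have d2: "(\<Sum>k\<in>S. \<bar>g k\<bar>) \<le> int (word_dist x y)"
    using lower[of S w0] w0 target by (simp add: S_def)
  show ?thesis using d1 d2 lenW l1 by (simp add: c_def)
qed

end
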